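(* For every zero-normalized $\Gamma$-semimodule $\Delta$ one has $\widehat{\widehat{\Delta}}=\Delta$.
   Context: Let $m,n$ be coprime positive integers and $\Gamma=\{am+bn:a,b\in\mathbb{Z}_{\ge0}\}$. A $\Gamma$-semimodule is $\Delta\subset\mathbb{Z}_{\ge0}$ with $\Delta+\Gamma\subset\Delta$; it is zero-normalized if $\min\Delta=0$. The dual is $\Delta^*=\{\varphi\in\mathbb{Z}:\varphi+\Delta\subset\Gamma\}$, and $\widehat\Delta=\Delta^*-\min\Delta^*$ is its zero-normalization; equivalently $\widehat\Delta=\max(\mathbb{Z}\setminus\Delta)-(\mathbb{Z}\setminus\Delta)$. *)

theory Defs
  imports Main
begin

definition Gam :: "int \<Rightarrow> int \<Rightarrow> int set" where
  "Gam m n = {a * m + b * n | a b. a \<ge> 0 \<and> b \<ge> 0}"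

definition semimodule :: "int \<Rightarrow> int \<Rightarrow> int set \<Rightarrow> bool" where
  "semimodule m n D \<longleftrightarrow> D \<subseteq> {0..} \<and> (\<forall>x\<in>D. \<forall>g\<in>Gam m n. x + g \<in> D)"

definition zero_normalized :: "int \<Rightarrow> int \<Rightarrow> int set \<Rightarrow> bool" where
  "zero_normalized m n D \<longleftrightarrow> semimodule m n D \<and> 0 \<in> D \<and> (\<forall>x\<in>D. 0 \<le> x)"

definition dual :: "int \<Rightarrow> int \<Rightarrow> int set \<Rightarrow> int set" where
  "dual m n D = {phi. \<forall>d\<in>D. phi + d \<in> Gam m n}"

definition hat :: "int \<Rightarrow> int \<Rightarrow> int set \<Rightarrow> int set" where
  "hat m n D = (\<lambda>x. x - Inf (dual m n D)) ` dual m n D"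

end

theory Submission
  imports Defs
begin

lemma Gam_nonneg: "m > 0 \<Longrightarrow> n > 0 \<Longrightarrow> x \<in> Gam m n \<Longrightarrow> x \<ge> 0"
  unfolding Gam_def by auto

lemma Gam_zero: "0 \<in> Gam m n"
  unfolding Gam_def by force

lemma Gam_add: "x \<in> Gam m n \<Longrightarrow> y \<in> Gam m n \<Longrightarrow> x + y \<in> Gam m n"
  unfolding Gam_def
proof (clarify)
  fix a b c d :: int
  assume "a \<ge> 0" "b \<ge> 0" "c \<ge> 0" "d \<ge> 0"
  then show "\<exists>a' b'. a * m + b * n + (c * m + d * n) = a' * m + b' * n \<and> a' \<ge> 0 \<and> b' \<ge> 0"
    by (rule_tac x="a+c" in exI, rule_tac x="b+d" in exI) (auto simp: algebra_simps)
qed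

lemma Gam_sym:
  fixes m n x :: int
  assumes m: "m > 0" and n: "n > 0" and cop: "coprime m n"
  shows "x \<in> Gam m n \<longleftrightarrow> (m*n - m - n - x) \<notin> Gam m n"
proof
  assume "x \<in> Gam m n"
  then obtain a b where ab: "x = a*m + b*n" "a \<ge> 0" "b \<ge> 0" unfolding Gam_def by auto
  show "(m*n - m - n - x) \<notin> Gam m n"
  proof
    assume "(m*n - m - n - x) \<in> Gam m n"
    then obtain c d where cd: "m*n - m - n - x = c*m + d*n" "c \<ge> 0" "d \<ge> 0" unfolding Gam_def by auto
    have eq: "(a+c+1)*m + (b+d+1)*n = m*n" using ab cd by (simp add: algebra_simps)
    have "n dvd (a+c+1)*m"
    proof -
      have "(a+c+1)*m = n*(m - (b+d+1))" using eq by (simp add: algebra_simps)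
      then show ?thesis by simp
    qed
    then have "n dvd (a+c+1)" using cop
      by (metis coprime_commute coprime_dvd_mult_left_iff)
    then have n1: "n \<le> a+c+1" using ab cd by (intro zdvd_imp_le) auto
    have "m dvd (b+d+1)*n"
    proof -
      have "(b+d+1)*n = m*(n - (a+c+1))" using eq by (simp add: algebra_simps)
      then show ?thesis by simp
    qed
    then have "m dvd (b+d+1)" using cop
      by (metis coprime_dvd_mult_left_iff)
    then have m1: "m \<le> b+d+1" using ab cd by (intro zdvd_imp_le) auto
    have "n*m \<le> (a+c+1)*m" using n1 m by (intro mult_right_mono) auto
    moreover have "m*n \<le> (b+d+1)*n" using m1 n by (intro mult_right_mono) auto
    ultimately have "2*(m*n) \<le> m*n" using eq by (simp add: algebra_simps)
    then show False using m n by (simp add: mult_pos_pos)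
  qed
next
  assume nG: "(m*n - m - n - x) \<notin> Gam m n"
  obtain u v where uv: "u*m + v*n = gcd m n" using bezout_int by blast
  then have uv1: "u*m + v*n = 1" using cop by simp
  define a where "a = (x*u) mod n"
  have a0: "0 \<le> a" "a < n" using n unfolding a_def by auto
  have "n dvd (x - a*m)"
  proof -
    have "x - a*m = x*(u*m+v*n) - a*m" using uv1 by simp
    also have "\<dots> = (x*u - a)*m + x*v*n" by (simp add: algebra_simps)
    finally have e: "x - a*m = (x*u - a)*m + x*v*n" .
    have "n dvd (x*u - a)" unfolding a_def by (simp add: mod_eq_dvd_iff minus_mod_eq_mult_div[symmetric])
    then show ?thesis unfolding e by simp
  qed
  then obtain b where b: "x - a*m = n*b" by (auto simp: dvd_def)
  show "x \<in> Gam m n"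
  proof (cases "b \<ge> 0")
    case True
    have "x = a*m + b*n" using b by (simp add: algebra_simps)
    then show ?thesis unfolding Gam_def using a0 True by blast
  next
    case False
    have "m*n - m - n - x = (n-1-a)*m + (-1-b)*n" using b by (simp add: algebra_simps)
    moreover have "n-1-a \<ge> 0" "-1-b \<ge> 0" using a0 False by auto
    ultimately have "m*n - m - n - x \<in> Gam m n" unfolding Gam_def by blast
    then show ?thesis using nG by simp
  qed
qed

lemma dual_char:
  assumes m: "m > 0" and n: "n > 0" and cop: "coprime m n"
    and cl: "\<forall>x\<in>E. \<forall>g\<in>Gam m n. x + g \<in> E"
  shows "dual m n E = {phi. m*n - m - n - phi \<notin> E}"
proof (intro set_eqI iffI)
  fix phi assume p: "phi \<in> dual m n E"
  show "phi \<in> {phi. m*n - m - n - phi \<notin> E}"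
  proof (clarify)
    assume "m*n - m - n - phi \<in> E"
    then have "phi + (m*n - m - n - phi) \<in> Gam m n" using p unfolding dual_def by blast
    moreover have "m*n - m - n - (m*n - m - n) \<in> Gam m n" using Gam_zero by simp
    moreover have "phi + (m*n - m - n - phi) = m*n-m-n" by simp
    ultimately show False using Gam_sym[OF m n cop, of "m*n-m-n"] by metis
  qed
next
  fix phi assume p: "phi \<in> {phi. m*n - m - n - phi \<notin> E}"
  show "phi \<in> dual m n E" unfolding dual_def
  proof (clarify)
    fix d assume d: "d \<in> E"
    show "phi + d \<in> Gam m n"
    proof (rule ccontr)
      assume "phi + d \<notin> Gam m n"
      then have "m*n - m - n - (phi + d) \<in> Gam m n" using Gam_sym[OF m n cop, of "phi+d"] by blast
      then have "d + (m*n - m - n - (phi + d)) \<in> E" using cl d by blast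
      moreover have "d + (m*n - m - n - (phi + d)) = m*n - m - n - phi" by simp
      ultimately show False using p by simp
    qed
  qed
qed

lemma dual_closed:
  "\<forall>x\<in>dual m n E. \<forall>g\<in>Gam m n. x + g \<in> dual m n E"
  unfolding dual_def
proof (clarify)
  fix x g d assume "\<forall>d\<in>E. x + d \<in> Gam m n" "g \<in> Gam m n" "d \<in> E"
  then have "(x + d) + g \<in> Gam m n" using Gam_add by blast
  then show "x + g + d \<in> Gam m n" by (simp add: algebra_simps)
qed

lemma int_min_exists:
  fixes X :: "int set"
  assumes "X \<noteq> {}" "\<forall>x\<in>X. 0 \<le> x"
  shows "\<exists>z\<in>X. \<forall>x\<in>X. z \<le> x"
proof -
  obtain x where x: "x \<in> X" using assms by auto
  define k where "k = (LEAST k::nat. int k \<in> X)"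
  have "int (nat x) \<in> X" using x assms by simp
  then have kX: "int k \<in> X" unfolding k_def by (rule LeastI)
  have "\<forall>y\<in>X. int k \<le> y"
  proof
    fix y assume y: "y \<in> X"
    then have "int (nat y) \<in> X" using assms by simp
    then have "k \<le> nat y" unfolding k_def by (rule Least_le)
    then have "int k \<le> int (nat y)" by (rule of_nat_mono)
    moreover have "int (nat y) = y" using assms(2) y by simp
    ultimately show "int k \<le> y" by linarith
  qed
  then show ?thesis using kX by blast
qed

theorem mainTheorem10:
  fixes m n :: int and D :: "int set"
  assumes "m > 0" and "n > 0" and "coprime m n"
    and "zero_normalized m n D"
  shows "hat m n (hat m n D) = D"
proof -
  note m = assms(1) and n = assms(2) and cop = assms(3)
  have D0: "0 \<in> D" and Dpos: "\<forall>x\<in>D. 0 \<le> x" and Dcl: "\<forall>x\<in>D. \<forall>g\<in>Gam m n. x + g \<in> D"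
    using assms(4) unfolding zero_normalized_def semimodule_def by auto
  define g where "g = m*n - m - n"
  define S where "S = dual m n D"
  have Sc: "S = {phi. g - phi \<notin> D}" unfolding S_def g_def by (rule dual_char[OF m n cop Dcl])
  have SS: "dual m n S = D"
  proof -
    have "dual m n S = {phi. g - phi \<notin> S}" unfolding g_def S_def
      by (rule dual_char[OF m n cop dual_closed])
    also have "\<dots> = D" unfolding Sc by auto
    finally show ?thesis .
  qed
  have Sne: "S \<noteq> {}" using Dpos unfolding Sc by (auto intro!: exI[of _ "g+1"])
  have Spos: "\<forall>x\<in>S. 0 \<le> x"
  proof
    fix x assume "x \<in> S"
    then have "x + 0 \<in> Gam m n" using D0 unfolding S_def dual_def by blast
    then show "0 \<le> x" using Gam_nonneg[OF m n] by simp
  qed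
  obtain mu where mu: "mu \<in> S" "\<forall>x\<in>S. mu \<le> x" using int_min_exists[OF Sne Spos] by blast
  have Inf1: "Inf S = mu" using mu by (intro cInf_eq_minimum) auto
  have H1: "hat m n D = (\<lambda>x. x - mu) ` S" unfolding hat_def S_def[symmetric] Inf1 ..
  have dH: "dual m n (hat m n D) = {psi. psi - mu \<in> D}"
  proof -
    have "dual m n (hat m n D) = {psi. psi - mu \<in> dual m n S}"
      unfolding H1 dual_def by (auto simp: algebra_simps)
    then show ?thesis using SS by simp
  qed
  have Inf2: "Inf (dual m n (hat m n D)) = mu" unfolding dH
    using D0 Dpos by (intro cInf_eq_minimum) force+
  have "hat m n (hat m n D) = (\<lambda>x. x - mu) ` {psi. psi - mu \<in> D}"
    unfolding hat_def[of m n "hat m n D"] Inf2 dH[symmetric] ..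
  then show ?thesis
    by (force intro: image_eqI[of _ _ "_ + mu"])
qed

end
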